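(* Let $Q$ be a query decomposed into $k$ edge-disjoint TC-subqueries $Q^1,\dots,Q^k$ (in a prefix-connected order), and assume that an incoming edge matches each edge of $Q$ with probability $1/d$, where $d$ is the number of distinct edge labels in $Q$. Consider an incoming edge $\sigma$ that matches one or more edges of $Q$. Then the total expected number of join operations for inserting $\sigma$ (in the worst case where every join result is nonempty) is \[ N=\frac{1}{d}\left((|E(Q)|-1)+\frac{k}{2}(k-1)\right). \]
   Context: A query $Q$ has directed labelled edges $E(Q)$ and a strict partial order $\prec$ (timing order) on them. A TC-query (timing-connected query) is one whose edges can be ordered $\epsilon_1,\dots,\epsilon_m$ with every prefix inducing a weakly connected subquery and $\epsilon_j\prec\epsilon_{j+1}$ for all $j$ (its timing sequence). A TC decomposition of $Q$ is a set of pairwise edge-disjoint TC-subqueries $Q^1,\dots,Q^k$ whose union is $Q$, ordered so that each $Q^1\cup\dots\cup Q^i$ is weakly connected. Evaluation model (the joins being counted): for each $Q^i$, matches of each prefix $\{\epsilon_1,\dots,\epsilon_j\}$ of its timing sequence are stored; when an incoming edge matches $\epsilon_1$ of some $Q^i$ no join is performed, and when it matches $\epsilon_j$ with $j>1$ it is joined once with the stored matches of $\{\epsilon_1,\dots,\epsilon_{j-1}\}$. Matches of $Q^1\cup\dots\cup Q^i$ are also stored for each $i$; when new matches of $Q^1$ arise they are joined successively with the matches of $Q^2,\dots,Q^k$ ($k-1$ joins), and when new matches of $Q^i$ with $i>1$ arise they are joined with the stored matches of $Q^1\cup\dots\cup Q^{i-1}$ and then successively with $Q^{i+1},\dots,Q^k$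 ($k-i+1$ joins). Edge labels here combine the edge label and the labels of its endpoints. *)

theory Defs
  imports "HOL-Probability.Probability"
begin

definition wconn :: "('q \<Rightarrow> 'v) \<Rightarrow> ('q \<Rightarrow> 'v) \<Rightarrow> 'q set \<Rightarrow> bool" where
  "wconn src tgt F \<longleftrightarrow>
     (\<forall>e\<in>F. \<forall>f\<in>F. (e, f) \<in>
        {(a, b). a \<in> F \<and> b \<in> F \<and> {src a, tgt a} \<inter> {src b, tgt b} \<noteq> {}}\<^sup>*)"

text \<open>A TC-subquery is given by (the edge set of) such a sequence.\<close>

definition is_timing_seq ::
  "('q \<Rightarrow> 'v) \<Rightarrow> ('q \<Rightarrow> 'v) \<Rightarrow> ('q \<Rightarrow> 'q \<Rightarrow> bool) \<Rightarrow> 'q list \<Rightarrow> bool" where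
  "is_timing_seq src tgt prec es \<longleftrightarrow>
     es \<noteq> [] \<and> distinct es \<and>
     (\<forall>j\<in>{1..length es}. wconn src tgt (set (take j es))) \<and>
     (\<forall>j. Suc j < length es \<longrightarrow> prec (es ! j) (es ! Suc j))"

definition is_TC_decomp ::
  "('q \<Rightarrow> 'v) \<Rightarrow> ('q \<Rightarrow> 'v) \<Rightarrow> ('q \<Rightarrow> 'q \<Rightarrow> bool) \<Rightarrow> 'q set \<Rightarrow> 'q list list \<Rightarrow> bool" where
  "is_TC_decomp src tgt prec E seqs \<longleftrightarrow>
     seqs \<noteq> [] \<and>
     (\<forall>s\<in>set seqs. is_timing_seq src tgt prec s) \<and>
     (\<forall>i<length seqs. \<forall>i'<length seqs. i \<noteq> i' \<longrightarrow> set (seqs ! i) \<inter> set (seqs ! i') = {}) \<and>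
     (\<Union>s\<in>set seqs. set s) = E \<and>
     (\<forall>i\<in>{1..length seqs}. wconn src tgt (\<Union>s\<in>set (take i seqs). set s))"

text \<open>Number of joins performed (worst case: every join result nonempty) when the
incoming edge matches the edge at 0-based position j of the timing sequence of the
0-based subquery i (i.e. edge epsilon_(j+1) of Q^(i+1)), with k = length seqs:
one join with the stored prefix matches if j > 0; and if this edge is the last
one of the timing sequence, new matches of Q^(i+1) arise, which cost k-1 joins
for the first subquery and k-(i+1)+1 = k-i joins otherwise.\<close>

definition join_cost :: "'q list list \<Rightarrow> nat \<Rightarrow> nat \<Rightarrow> nat" where
  "join_cost seqs i j =
     (if 0 < j then 1 else 0) +
     (if Suc j = length (seqs ! i)
      then (if i = 0 then length seqs - 1 else length seqs - i) else 0)"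

definition join_count :: "('e \<Rightarrow> 'q \<Rightarrow> bool) \<Rightarrow> 'q list list \<Rightarrow> 'e \<Rightarrow> nat" where
  "join_count matches seqs \<sigma> =
     (\<Sum>i<length seqs. \<Sum>j<length (seqs ! i).
        if matches \<sigma> (seqs ! i ! j) then join_cost seqs i j else 0)"

end

theory Submission imports Defs begin
lemma gs: "2 * (\<Sum>i<k. Suc i) = k * (k + 1::nat)"
  by (induction k) auto
lemma ks: "(\<Sum>i<k. (k - i)) = (\<Sum>i<k. Suc i::nat)"
proof -
  have "(\<Sum>i<k. Suc (k - Suc i)) = (\<Sum>i<k. Suc i)" by (rule sum.nat_diff_reindex)
  moreover have "(\<Sum>i<k. Suc (k - Suc i)) = (\<Sum>i<k. k - i)"
    by (rule sum.cong) auto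
  ultimately show ?thesis by simp
qed
lemma costsum:
  assumes "L \<ge> 1" "i < length seqs" "L = length (seqs ! i)"
  shows "(\<Sum>j<L. join_cost seqs i j) = (L - 1) + (if i = 0 then length seqs - 1 else length seqs - i)"
proof -
  obtain m where m: "L = Suc m" using assms(1) by (cases L) auto
  have "(\<Sum>j<Suc m. join_cost seqs i j) = (\<Sum>j<m. join_cost seqs i j) + join_cost seqs i m" by simp
  moreover have "(\<Sum>j<m. join_cost seqs i j) = (\<Sum>j<m. (if 0 < j then 1 else 0))"
    by (rule sum.cong) (use m assms in \<open>auto simp: join_cost_def\<close>)
  moreover have "(\<Sum>j<m. (if 0 < j then 1 else 0::nat)) = m - 1"
  proof -
    have "(\<Sum>j<m. (if 0 < j then 1 else 0::nat)) = card ({..<m} \<inter> {j. 0 < j})"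
      by (simp add: sum.If_cases)
    also have "{..<m} \<inter> {j. 0 < j} = {1..<m}" by auto
    finally show ?thesis by simp
  qed
  ultimately show ?thesis using m assms by (auto simp: join_cost_def)
qed
lemma cardE:
  assumes "is_TC_decomp src tgt prec E seqs"
  shows "card E = (\<Sum>i<length seqs. length (seqs ! i))"
proof -
  have D: "\<forall>i<length seqs. \<forall>i'<length seqs. i \<noteq> i' \<longrightarrow> set (seqs ! i) \<inter> set (seqs ! i') = {}"
    and U: "(\<Union>s\<in>set seqs. set s) = E"
    and T: "\<forall>s\<in>set seqs. is_timing_seq src tgt prec s"
    using assms by (auto simp: is_TC_decomp_def)
  have "E = (\<Union>i\<in>{..<length seqs}. set (seqs ! i))"
    using U by (auto simp: set_conv_nth)
  hence "card E = (\<Sum>i<length seqs. card (set (seqs ! i)))"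
    using D by (simp add: card_UN_disjoint)
  also have "\<dots> = (\<Sum>i<length seqs. length (seqs ! i))"
    by (rule sum.cong) (use T in \<open>auto simp: is_timing_seq_def distinct_card\<close>)
  finally show ?thesis .
qed

lemma costtotal:
  assumes "is_TC_decomp src tgt prec E seqs"
  shows "2 * (\<Sum>i<length seqs. \<Sum>j<length (seqs ! i). join_cost seqs i j) + 2 =
         2 * card E + length seqs * (length seqs - 1)"
proof -
  define k where "k = length seqs"
  have T: "\<forall>s\<in>set seqs. is_timing_seq src tgt prec s" and k1: "k \<ge> 1"
    using assms by (auto simp: is_TC_decomp_def k_def Suc_le_eq)
  have L: "\<And>i. i < k \<Longrightarrow> length (seqs ! i) \<ge> 1"
    using T by (auto simp: k_def is_timing_seq_def Suc_le_eq)
  have "(\<Sum>i<k. \<Sum>j<length (seqs ! i). join_cost seqs i j) =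
        (\<Sum>i<k. (length (seqs ! i) - 1) + (if i = 0 then k - 1 else k - i))"
    by (rule sum.cong) (use L in \<open>simp_all add: k_def costsum\<close>)
  also have "\<dots> = (\<Sum>i<k. length (seqs ! i) - 1) + (\<Sum>i<k. (if i = 0 then k - 1 else k - i))"
    by (rule sum.distrib)
  finally have A: "(\<Sum>i<k. \<Sum>j<length (seqs ! i). join_cost seqs i j) =
      (\<Sum>i<k. length (seqs ! i) - 1) + (\<Sum>i<k. (if i = 0 then k - 1 else k - i))" .
  have B: "(\<Sum>i<k. length (seqs ! i) - 1) + k = (\<Sum>i<k. length (seqs ! i))"
  proof -
    have "(\<Sum>i<k. length (seqs ! i) - 1) + (\<Sum>i<k. 1) = (\<Sum>i<k. length (seqs ! i) - 1 + 1)"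
      by (rule sum.distrib[symmetric])
    also have "\<dots> = (\<Sum>i<k. length (seqs ! i))" by (rule sum.cong) (use L in \<open>force\<close>)+
    finally show ?thesis by simp
  qed
  have C: "(\<Sum>i<k. (if i = 0 then k - 1 else k - i)) + 1 = (\<Sum>i<k. k - i)"
  proof -
    obtain m where m: "k = Suc m" using k1 by (cases k) auto
    have "(\<Sum>i<k. (if i = 0 then k - 1 else k - i)) = (k - 1) + (\<Sum>i\<in>{1..<k}. k - i)"
      unfolding m lessThan_Suc_eq_insert_0 by (simp add: sum.reindex atLeastLessThanSuc_atLeastAtMost[symmetric] image_Suc_lessThan)
    moreover have "(\<Sum>i<k. k - i) = k + (\<Sum>i\<in>{1..<k}. k - i)"
      unfolding m lessThan_Suc_eq_insert_0 by (simp add: sum.reindex atLeastLessThanSuc_atLeastAtMost[symmetric] image_Suc_lessThan)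
    ultimately show ?thesis using k1 by simp
  qed
  have G: "2 * (\<Sum>i<k. k - i) = k * (k + 1)" using gs ks by simp
  have "card E = (\<Sum>i<k. length (seqs ! i))" using cardE[OF assms] k_def by simp
  with A B C G k1 have "2 * (\<Sum>i<k. \<Sum>j<length (seqs ! i). join_cost seqs i j) + 2 =
         2 * card E + k * (k - 1)"
    by (cases k) (auto simp: algebra_simps)
  thus ?thesis by (simp add: k_def)
qed

lemma expect_pmf_ind:
  fixes M :: "'e pmf"
  shows "measure_pmf.expectation M (\<lambda>\<sigma>. c * indicator A \<sigma>) = c * measure_pmf.prob M A"
  by simp

lemma integ_pmf_ind:
  fixes M :: "'e pmf"
  shows "integrable (measure_pmf M) (\<lambda>\<sigma>. (c::real) * indicator A \<sigma>)"
  by (intro integrable_mult_right integrable_real_indicator) (simp_all add: measure_pmf.emeasure_eq_measure)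

theorem theorem7:
  fixes E :: "'q set"
    and src tgt :: "'q \<Rightarrow> 'v"
    and lab :: "'q \<Rightarrow> 'l"
    and prec :: "'q \<Rightarrow> 'q \<Rightarrow> bool"
    and seqs :: "'q list list"
    and M :: "'e pmf"
    and matches :: "'e \<Rightarrow> 'q \<Rightarrow> bool"
    and d k :: nat
  assumes "finite E"
    and "\<forall>x\<in>E. \<not> prec x x"
    and "\<forall>x\<in>E. \<forall>y\<in>E. \<forall>z\<in>E. prec x y \<longrightarrow> prec y z \<longrightarrow> prec x z"
    and "is_TC_decomp src tgt prec E seqs"
    and "k = length seqs"
    and "d = card (lab ` E)"
    and "\<forall>\<epsilon>\<in>E. measure_pmf.prob M {\<sigma>. matches \<sigma> \<epsilon>} = 1 / real d"
  shows "measure_pmf.expectation M (\<lambda>\<sigma>. real (join_count matches seqs \<sigma>))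
           = (1 / real d) * ((real (card E) - 1) + real k / 2 * (real k - 1))"
proof -
  have inE: "\<And>i j. i < length seqs \<Longrightarrow> j < length (seqs ! i) \<Longrightarrow> seqs ! i ! j \<in> E"
    using assms(4) unfolding is_TC_decomp_def by (auto simp: set_conv_nth)
  have jc: "(\<lambda>\<sigma>. real (join_count matches seqs \<sigma>)) = (\<lambda>\<sigma>. \<Sum>i<length seqs. \<Sum>j<length (seqs ! i).
      real (join_cost seqs i j) * indicator {\<sigma>. matches \<sigma> (seqs ! i ! j)} \<sigma>)"
    unfolding join_count_def of_nat_sum by (intro ext sum.cong refl) (simp add: indicator_def)
  have "measure_pmf.expectation M (\<lambda>\<sigma>. real (join_count matches seqs \<sigma>)) =
     (\<Sum>i<length seqs. \<Sum>j<length (seqs ! i).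
      real (join_cost seqs i j) * measure_pmf.prob M {\<sigma>. matches \<sigma> (seqs ! i ! j)})"
  proof -
    have I: "integrable (measure_pmf M) (\<lambda>\<sigma>. \<Sum>j<length (seqs ! i).
      real (join_cost seqs i j) * indicator {\<sigma>. matches \<sigma> (seqs ! i ! j)} \<sigma>)" for i
      by (rule Bochner_Integration.integrable_sum, rule integ_pmf_ind)
    have J: "measure_pmf.expectation M (\<lambda>\<sigma>. \<Sum>j<length (seqs ! i).
      real (join_cost seqs i j) * indicator {\<sigma>. matches \<sigma> (seqs ! i ! j)} \<sigma>) =
      (\<Sum>j<length (seqs ! i). real (join_cost seqs i j) * measure_pmf.prob M {\<sigma>. matches \<sigma> (seqs ! i ! j)})" for i
      by (subst Bochner_Integration.integral_sum) (rule integ_pmf_ind, rule sum.cong, rule refl, rule expect_pmf_ind)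
    have K: "measure_pmf.expectation M (\<lambda>\<sigma>. \<Sum>i<length seqs. \<Sum>j<length (seqs ! i).
      real (join_cost seqs i j) * indicator {\<sigma>. matches \<sigma> (seqs ! i ! j)} \<sigma>) =
      (\<Sum>i<length seqs. measure_pmf.expectation M (\<lambda>\<sigma>. \<Sum>j<length (seqs ! i).
      real (join_cost seqs i j) * indicator {\<sigma>. matches \<sigma> (seqs ! i ! j)} \<sigma>))"
      by (rule Bochner_Integration.integral_sum) (rule I)
    show ?thesis unfolding jc K J ..
  qed
  also have "\<dots> = (\<Sum>i<length seqs. \<Sum>j<length (seqs ! i). real (join_cost seqs i j) * (1 / real d))"
    using assms(7) inE by (auto intro!: sum.cong)
  also have "\<dots> = (1 / real d) * real (\<Sum>i<length seqs. \<Sum>j<length (seqs ! i). join_cost seqs i j)"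
    by (simp add: of_nat_sum sum_distrib_left sum_distrib_right mult.commute)
  also have "real (\<Sum>i<length seqs. \<Sum>j<length (seqs ! i). join_cost seqs i j)
      = (real (card E) - 1) + real k / 2 * (real k - 1)"
  proof -
    have k1: "k \<ge> 1" using assms(4,5) by (auto simp: is_TC_decomp_def Suc_le_eq)
    define S where "S = (\<Sum>i<length seqs. \<Sum>j<length (seqs ! i). join_cost seqs i j)"
    have N: "2 * S + 2 = 2 * card E + k * (k - 1)"
      using costtotal[OF assms(4)] assms(5) by (simp add: S_def)
    have "real (2 * S + 2) = real (2 * card E + k * (k - 1))" using N by simp
    hence "2 * real S + 2 = 2 * real (card E) + real k * (real k - 1)"
      using k1 by (simp add: of_nat_diff)
    thus ?thesis unfolding S_def[symmetric] by (simp add: field_simps)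
  qed
  finally show ?thesis .
qed

end
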